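(* Let $p$ be an odd prime and let $F_{g\,\mathsf{PR},\,h\,\mathsf{ANY}}(p)$ denote the number of pairs $(g,h)$ of integers with $1\le g\le p-1$, $1\le h\le p-1$, $g$ a primitive root modulo $p$, and $g^{h}\equiv h \pmod p$. Then \[ \left|F_{g\,\mathsf{PR},\,h\,\mathsf{ANY}}(p)-\phi(p-1)\right|\le d(p-1)^{2}\,\sigma(p-1)\,\sqrt{p}\,(1+\ln p). \]
   Context: $\phi$ is Euler's totient function, $d(n)$ denotes the number of positive divisors of $n$, $\sigma(n)$ the sum of the positive divisors of $n$, and $\ln$ the natural logarithm. *)

theory Defs
  imports "HOL-Analysis.Analysis" "HOL-Number_Theory.Number_Theory"
begin

definition num_divisors :: "nat \<Rightarrow> nat" where
  "num_divisors n = card {d. d dvd n \<and> d > 0}"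

definition sum_divisors :: "nat \<Rightarrow> nat" where
  "sum_divisors n = (\<Sum>d\<in>{d. d dvd n \<and> d > 0}. d)"

definition F_PR_ANY :: "nat \<Rightarrow> nat" where
  "F_PR_ANY p = card {(g, h). g \<in> {1..p-1} \<and> h \<in> {1..p-1} \<and>
      residue_primroot p g \<and> [g ^ h = h] (mod p)}"

end

theory Submission imports Defs begin

lemma countA:
  fixes p h :: nat
  assumes p: "prime p" and h: "h > 0"
  shows "card {g\<in>{1..p-1}. [g ^ h = h] (mod p)} \<le> gcd h (p - 1)"
proof (cases "{g\<in>{1..p-1}. [g ^ h = h] (mod p)} = {}")
  case True then show ?thesis by (simp only: card.empty) 
next
  case False
  then obtain g1 where g1: "g1 \<in> {1..p-1}" "[g1 ^ h = h] (mod p)" by blast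
  have p1: "p > 1" using p prime_gt_1_nat by blast
  have ndg: "\<not> p dvd g" if "g \<in> {1..p-1}" for g
    using that p1 by (auto dest: dvd_imp_le)
  define u where "u = g1 ^ (p - 2)"
  have g1u: "[g1 * u = 1] (mod p)"
  proof -
    have "g1 * u = g1 ^ (p - 1)" unfolding u_def using p1
      by (metis Suc_diff_Suc Suc_1 diff_Suc_eq_diff_pred power_Suc)
    then show ?thesis using fermat_theorem[OF p ndg[OF g1(1)]] by simp
  qed
  have ndu: "\<not> p dvd u" unfolding u_def using ndg[OF g1(1)] p prime_dvd_power by blast
  define f where "f = (\<lambda>g. g * u mod p)"
  define d where "d = gcd h (p - 1)"
  have dpos: "d > 0" unfolding d_def using h by simp
  have inj: "inj_on f {g\<in>{1..p-1}. [g ^ h = h] (mod p)}"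
  proof (rule inj_onI)
    fix x y assume x: "x \<in> {g\<in>{1..p-1}. [g ^ h = h] (mod p)}" and y: "y \<in> {g\<in>{1..p-1}. [g ^ h = h] (mod p)}"
      and e: "f x = f y"
    have "[x * u = y * u] (mod p)" using e unfolding f_def cong_def .
    then have "[x * u * g1 = y * u * g1] (mod p)" by (rule cong_mult) simp
    moreover have "[x * u * g1 = x] (mod p)"
      using cong_mult[OF cong_refl[of x] g1u] by (simp add: mult.commute mult.left_commute)
    moreover have "[y * u * g1 = y] (mod p)"
      using cong_mult[OF cong_refl[of y] g1u] by (simp add: mult.commute mult.left_commute)
    ultimately have "[x = y] (mod p)" by (meson cong_sym cong_trans)
    then show "x = y" using x y p1 by (auto simp: cong_def)
  qed
  have img: "f ` {g\<in>{1..p-1}. [g ^ h = h] (mod p)} \<subseteq> {x\<in>{..<p}. [x ^ d = 1] (mod p)}"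
  proof safe
    fix g assume g: "g \<in> {1..p-1}" "[g ^ h = h] (mod p)"
    show "f g < p" unfolding f_def using p1 by simp
    have c1: "[f g ^ h = 1] (mod p)"
    proof -
      have "[f g ^ h = (g * u) ^ h] (mod p)" unfolding f_def by (simp add: cong_def power_mod)
      also have "(g * u) ^ h = g ^ h * u ^ h" by (simp add: power_mult_distrib)
      also have "[g ^ h * u ^ h = h * u ^ h] (mod p)" using g(2) by (intro cong_mult) auto
      also have "[h * u ^ h = g1 ^ h * u ^ h] (mod p)" using g1(2) by (intro cong_mult) (auto simp: cong_sym)
      also have "g1 ^ h * u ^ h = (g1 * u) ^ h" by (simp add: power_mult_distrib)
      also have "[(g1 * u) ^ h = 1 ^ h] (mod p)" using g1u by (rule cong_pow)
      finally show ?thesis by simp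
    qed
    have "\<not> p dvd f g"
    proof
      assume "p dvd f g"
      then have "p dvd g * u" unfolding f_def by (simp add: dvd_mod_iff)
      then show False using ndg[OF g(1)] ndu p by (simp add: prime_dvd_mult_iff)
    qed
    then have c2: "[f g ^ (p - 1) = 1] (mod p)" using fermat_theorem[OF p] by blast
    have "ord p (f g) dvd h" "ord p (f g) dvd (p - 1)" using c1 c2 ord_divides by blast+
    then have "ord p (f g) dvd d" unfolding d_def by simp
    then show "[f g ^ d = 1] (mod p)" using ord_divides by blast
  qed
  have "card {g\<in>{1..p-1}. [g ^ h = h] (mod p)} = card (f ` {g\<in>{1..p-1}. [g ^ h = h] (mod p)})"
    using inj by (simp add: card_image)
  also have "\<dots> \<le> card {x\<in>{..<p}. [x ^ d = 1] (mod p)}" by (rule card_mono[OF _ img]) simp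
  also have "\<dots> \<le> d" by (rule roots_mod_prime_bound[OF p dpos])
  finally show ?thesis unfolding d_def .
qed

lemma gcd_sum:
  fixes n :: nat assumes n: "n > 0"
  shows "(\<Sum>h\<in>{1..n}. gcd h n) \<le> n * num_divisors n"
proof -
  let ?D = "{d. d dvd n \<and> d > 0}"
  have finD: "finite ?D" using n by (auto intro: finite_subset[of _ "{..n}"] dest: dvd_imp_le)
  have sub: "(\<lambda>h. gcd h n) ` {1..n} \<subseteq> ?D" using n by auto
  have "(\<Sum>h\<in>{1..n}. gcd h n) = (\<Sum>y\<in>(\<lambda>h. gcd h n) ` {1..n}. \<Sum>h\<in>{x\<in>{1..n}. gcd x n = y}. gcd h n)"
    by (rule sum.image_gen) simp
  also have "\<dots> \<le> (\<Sum>y\<in>(\<lambda>h. gcd h n) ` {1..n}. n)"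
  proof (rule sum_mono)
    fix y assume "y \<in> (\<lambda>h. gcd h n) ` {1..n}"
    then have y: "y > 0" "y dvd n" using n by auto
    have "(\<Sum>h\<in>{x\<in>{1..n}. gcd x n = y}. gcd h n) = y * card {x\<in>{1..n}. gcd x n = y}" by simp
    also have "{x\<in>{1..n}. gcd x n = y} \<subseteq> (\<lambda>k. y * k) ` {1..n div y}"
    proof
      fix x assume x: "x \<in> {x\<in>{1..n}. gcd x n = y}"
      then have "y dvd x" by auto
      then obtain k where k: "x = y * k" by blast
      have "k \<ge> 1" using x k by (cases k) auto
      moreover have "k \<le> n div y" using x k y
        by (metis atLeastAtMost_iff div_le_mono mem_Collect_eq nonzero_mult_div_cancel_left not_gr0)
      ultimately show "x \<in> (\<lambda>k. y * k) ` {1..n div y}" using k by auto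
    qed
    then have "card {x\<in>{1..n}. gcd x n = y} \<le> card ((\<lambda>k. y * k) ` {1..n div y})" by (intro card_mono) auto
    also have "\<dots> \<le> n div y" using card_image_le[of "{1..n div y}" "\<lambda>k. y * k"] by simp
    finally have "y * card {x\<in>{1..n}. gcd x n = y} \<le> y * (n div y)" by simp
    also have "\<dots> = n" using y by simp
    finally show "(\<Sum>h\<in>{x\<in>{1..n}. gcd x n = y}. gcd h n) \<le> n" by (simp add: mult.commute)
  qed
  also have "\<dots> = card ((\<lambda>h. gcd h n) ` {1..n}) * n" by simp
  also have "\<dots> \<le> card ?D * n" using card_mono[OF finD sub] by simp
  finally show ?thesis by (simp add: num_divisors_def mult.commute)
qed
lemma F_bound:
  fixes p :: nat assumes p: "prime p"
  shows "F_PR_ANY p \<le> (p - 1) * num_divisors (p - 1)"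
proof -
  let ?S = "\<lambda>h. {g\<in>{1..p-1}. [g ^ h = h] (mod p)}"
  have p1: "p > 1" using p prime_gt_1_nat by blast
  have sub: "{(g, h). g \<in> {1..p-1} \<and> h \<in> {1..p-1} \<and> residue_primroot p g \<and> [g ^ h = h] (mod p)}
     \<subseteq> (\<Union>h\<in>{1..p-1}. (\<lambda>g. (g, h)) ` ?S h)" by auto
  have "F_PR_ANY p \<le> card (\<Union>h\<in>{1..p-1}. (\<lambda>g. (g, h)) ` ?S h)"
    unfolding F_PR_ANY_def by (rule card_mono[OF _ sub]) auto
  also have "\<dots> \<le> (\<Sum>h\<in>{1..p-1}. card ((\<lambda>g. (g, h)) ` ?S h))" by (rule card_UN_le) simp
  also have "\<dots> \<le> (\<Sum>h\<in>{1..p-1}. gcd h (p - 1))"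
  proof (rule sum_mono)
    fix h assume h: "h \<in> {1..p-1}"
    have "card ((\<lambda>g. (g, h)) ` ?S h) \<le> card (?S h)" by (rule card_image_le) simp
    also have "\<dots> \<le> gcd h (p - 1)" using countA[OF p] h by auto
    finally show "card ((\<lambda>g. (g, h)) ` ?S h) \<le> gcd h (p - 1)" .
  qed
  also have "\<dots> \<le> (p - 1) * num_divisors (p - 1)" using gcd_sum p1 by simp
  finally show ?thesis .
qed

theorem mainTheorem2:
  fixes p :: nat
  assumes "prime p" and "odd p"
  shows "\<bar>real (F_PR_ANY p) - real (totient (p - 1))\<bar>
    \<le> real (num_divisors (p - 1)) ^ 2 * real (sum_divisors (p - 1)) * sqrt (real p) * (1 + ln (real p))"
proof -
  define n where "n = p - 1"
  have p1: "p > 1" using assms prime_gt_1_nat by blast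
  have n: "n > 0" unfolding n_def using p1 by simp
  have finD: "finite {d. d dvd n \<and> d > 0}" using n by (auto intro: finite_subset[of _ "{..n}"] dest: dvd_imp_le)
  have d1: "num_divisors n \<ge> 1" unfolding num_divisors_def using n finD
    by (metis (mono_tags, lifting) One_nat_def Suc_leI card_gt_0_iff dvd_refl empty_iff mem_Collect_eq)
  have sn: "sum_divisors n \<ge> n" unfolding sum_divisors_def
    using member_le_sum[of n "{d. d dvd n \<and> d > 0}" "\<lambda>d. d"] finD n by simp
  have F: "F_PR_ANY p \<le> n * num_divisors n" using F_bound[OF assms(1)] unfolding n_def .
  have T: "totient n \<le> n * num_divisors n" using totient_le[of n] d1
    by (metis dual_order.trans mult.right_neutral mult_le_mono2)
  have "\<bar>real (F_PR_ANY p) - real (totient n)\<bar> \<le> real (n * num_divisors n)"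
  proof -
    have "real (F_PR_ANY p) \<le> real (n * num_divisors n)" "real (totient n) \<le> real (n * num_divisors n)"
      using F T by (simp_all only: of_nat_le_iff)
    then show ?thesis by (simp only: abs_le_iff) linarith
  qed
  also have "\<dots> \<le> real (num_divisors n) ^ 2 * real (sum_divisors n)"
  proof -
    have "real n * real (num_divisors n) \<le> real (sum_divisors n) * (real (num_divisors n) * real (num_divisors n))"
      using sn d1 by (intro mult_mono) (auto simp: mult_le_cancel_left1)
    then show ?thesis by (simp add: power2_eq_square mult_ac)
  qed
  also have "\<dots> \<le> real (num_divisors n) ^ 2 * real (sum_divisors n) * (sqrt (real p) * (1 + ln (real p)))"
  proof -
    have "sqrt (real p) \<ge> 1" using p1 by simp
    moreover have "1 + ln (real p) \<ge> 1" using p1 by simp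
    ultimately have "1 \<le> sqrt (real p) * (1 + ln (real p))"
      by (metis mult_mono' mult_1_left zero_le_one)
    moreover have "real (num_divisors n) ^ 2 * real (sum_divisors n) \<ge> 0" by simp
    ultimately show ?thesis using mult_left_mono by fastforce
  qed
  finally show ?thesis unfolding n_def by (simp add: mult_ac)
qed

end
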